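(* Let $P$ be the feasible set of the rational mixed-integer program $\min\{c^Tx : Ax\le b,\ \ell\le x\le u,\ x_j\in\mathbb{Z} \text{ for all } j\in I\}$, where $A\in\mathbb{Q}^{m\times n}$, $c\in\mathbb{Q}^n$, $b\in\mathbb{Q}^m$, $\ell,u\in(\mathbb{Q}\cup\{\pm\infty\})^n$, $I\subseteq\{1,\dots,n\}$. Let $\alpha^Tx\le\beta$ be an inequality valid for $P$, let $s\ge 0$ be a scaling factor, and let $U,L\subseteq\{1,\dots,n\}$ be disjoint index sets such that $u_i<\infty$ for all $i\in U$, $\ell_i>-\infty$ for all $i\in L$, and $\alpha_i=0$ for all $i\notin U\cup L$. Then the scaled inequality $$\sum_{i\in U}\overline{s\alpha_i}\,x_i+\sum_{i\in L}\underline{s\alpha_i}\,x_i\;\le\;\overline{s\beta+\sum_{i\in U,\,u_i>0}(\overline{s\alpha_i}-\underline{s\alpha_i})\,u_i+\sum_{i\in L,\,\ell_i<0}(\underline{s\alpha_i}-\overline{s\alpha_i})\,\ell_i}$$ is valid for $P$ and $\mathbb{F}$-representable.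
   Context: An inequality is valid for $P$ if every point of $P$ satisfies it. $\mathbb{F}\subseteq\mathbb{Q}$ denotes a fixed set of floating-point numbers (e.g. IEEE double-precision numbers). For $x\in\mathbb{Q}$, $\overline{x}:=\min\{y\in\mathbb{F}: y>x\}$ and $\underline{x}:=\max\{y\in\mathbb{F}: y<x\}$ (assumed to exist for all numbers occurring). An inequality $a^Tx\le\beta$ is $\mathbb{F}$-representable if $a\in\mathbb{F}^n$ and $\beta\in\mathbb{F}$. *)

theory Defs
  imports Complex_Main
begin

text \<open>Vectors in R^n / Q^n are modelled as functions on nat, with indices 0..n-1
  (i.e. {..<n} plays the role of {1,...,n}).  Infinite bounds are modelled by None:
  l i = None means l_i = -infinity, u i = None means u_i = +infinity.\<close>

definition mip_feasible ::
  "nat \<Rightarrow> nat \<Rightarrow> (nat \<Rightarrow> nat \<Rightarrow> rat) \<Rightarrow> (nat \<Rightarrow> rat) \<Rightarrow>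
   (nat \<Rightarrow> rat option) \<Rightarrow> (nat \<Rightarrow> rat option) \<Rightarrow> nat set \<Rightarrow> (nat \<Rightarrow> real) set" where
  "mip_feasible n m A b l u I =
     {x. (\<forall>j<m. (\<Sum>i<n. of_rat (A j i) * x i) \<le> of_rat (b j))
       \<and> (\<forall>i<n. case l i of None \<Rightarrow> True | Some li \<Rightarrow> of_rat li \<le> x i)
       \<and> (\<forall>i<n. case u i of None \<Rightarrow> True | Some ui \<Rightarrow> x i \<le> of_rat ui)
       \<and> (\<forall>j\<in>I. x j \<in> \<int>)
       \<and> (\<forall>i\<ge>n. x i = 0)}"

definition valid_ineq :: "nat \<Rightarrow> (nat \<Rightarrow> rat) \<Rightarrow> rat \<Rightarrow> (nat \<Rightarrow> real) set \<Rightarrow> bool" where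
  "valid_ineq n a \<beta> P \<longleftrightarrow> (\<forall>x\<in>P. (\<Sum>i<n. of_rat (a i) * x i) \<le> of_rat \<beta>)"

definition F_representable :: "rat set \<Rightarrow> nat \<Rightarrow> (nat \<Rightarrow> rat) \<Rightarrow> rat \<Rightarrow> bool" where
  "F_representable F n a \<beta> \<longleftrightarrow> (\<forall>i<n. a i \<in> F) \<and> \<beta> \<in> F"

definition round_up :: "rat set \<Rightarrow> rat \<Rightarrow> rat" where
  "round_up F x = (LEAST y. y \<in> F \<and> x < y)"

definition round_down :: "rat set \<Rightarrow> rat \<Rightarrow> rat" where
  "round_down F x = (GREATEST y. y \<in> F \<and> y < x)"

definition has_round_up :: "rat set \<Rightarrow> rat \<Rightarrow> bool" where
  "has_round_up F x \<longleftrightarrow> (\<exists>y\<in>F. x < y \<and> (\<forall>z\<in>F. x < z \<longrightarrow> y \<le> z))"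

definition has_round_down :: "rat set \<Rightarrow> rat \<Rightarrow> bool" where
  "has_round_down F x \<longleftrightarrow> (\<exists>y\<in>F. y < x \<and> (\<forall>z\<in>F. z < x \<longrightarrow> z \<le> y))"

end

theory Submission
  imports Defs
begin

lemma round_up_props:
  assumes "has_round_up F x"
  shows "round_up F x \<in> F \<and> x < round_up F x"
proof -
  from assms obtain y where y: "y \<in> F" "x < y" "\<forall>z\<in>F. x < z \<longrightarrow> y \<le> z"
    unfolding has_round_up_def by blast
  have "round_up F x = y" unfolding round_up_def
    by (rule Least_equality) (use y in auto)
  with y show ?thesis by simp
qed

lemma round_down_props:
  assumes "has_round_down F x"
  shows "round_down F x \<in> F \<and> round_down F x < x"
proof -
  from assms obtain y where y: "y \<in> F" "y < x" "\<forall>z\<in>F. z < x \<longrightarrow> z \<le> y"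
    unfolding has_round_down_def by blast
  have "round_down F x = y" unfolding round_down_def
    by (rule Greatest_equality) (use y in auto)
  with y show ?thesis by simp
qed

theorem lemma2:
  fixes n m :: nat
    and A :: "nat \<Rightarrow> nat \<Rightarrow> rat" and b :: "nat \<Rightarrow> rat"
    and l u :: "nat \<Rightarrow> rat option" and I :: "nat set"
    and \<alpha> :: "nat \<Rightarrow> rat" and \<beta> s :: rat
    and U L :: "nat set" and F :: "rat set"
  assumes I: "I \<subseteq> {..<n}"
    and F0: "0 \<in> F"
    and valid: "valid_ineq n \<alpha> \<beta> (mip_feasible n m A b l u I)"
    and s: "s \<ge> 0"
    and UL: "U \<subseteq> {..<n}" "L \<subseteq> {..<n}" "U \<inter> L = {}"
    and ufin: "\<forall>i\<in>U. u i \<noteq> None"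
    and lfin: "\<forall>i\<in>L. l i \<noteq> None"
    and zero: "\<forall>i<n. i \<notin> U \<union> L \<longrightarrow> \<alpha> i = 0"
    and ex_coef: "\<forall>i\<in>U \<union> L. has_round_up F (s * \<alpha> i) \<and> has_round_down F (s * \<alpha> i)"
    and ex_rhs: "has_round_up F
        (s * \<beta>
         + (\<Sum>i\<in>{i\<in>U. the (u i) > 0}.
              (round_up F (s * \<alpha> i) - round_down F (s * \<alpha> i)) * the (u i))
         + (\<Sum>i\<in>{i\<in>L. the (l i) < 0}.
              (round_down F (s * \<alpha> i) - round_up F (s * \<alpha> i)) * the (l i)))"
  shows "valid_ineq n
           (\<lambda>i. if i \<in> U then round_up F (s * \<alpha> i)
                 else if i \<in> L then round_down F (s * \<alpha> i) else 0)
           (round_up F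
              (s * \<beta>
               + (\<Sum>i\<in>{i\<in>U. the (u i) > 0}.
                    (round_up F (s * \<alpha> i) - round_down F (s * \<alpha> i)) * the (u i))
               + (\<Sum>i\<in>{i\<in>L. the (l i) < 0}.
                    (round_down F (s * \<alpha> i) - round_up F (s * \<alpha> i)) * the (l i))))
           (mip_feasible n m A b l u I)
       \<and> F_representable F n
           (\<lambda>i. if i \<in> U then round_up F (s * \<alpha> i)
                 else if i \<in> L then round_down F (s * \<alpha> i) else 0)
           (round_up F
              (s * \<beta>
               + (\<Sum>i\<in>{i\<in>U. the (u i) > 0}.
                    (round_up F (s * \<alpha> i) - round_down F (s * \<alpha> i)) * the (u i))
               + (\<Sum>i\<in>{i\<in>L. the (l i) < 0}.
                    (round_down F (s * \<alpha> i) - round_up F (s * \<alpha> i)) * the (l i))))"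
proof -
  define up where "up i = round_up F (s * \<alpha> i)" for i
  define dn where "dn i = round_down F (s * \<alpha> i)" for i
  define c where "c i = (if i \<in> U then up i else if i \<in> L then dn i else 0)" for i
  define R where "R = s * \<beta>
               + (\<Sum>i\<in>{i\<in>U. the (u i) > 0}. (up i - dn i) * the (u i))
               + (\<Sum>i\<in>{i\<in>L. the (l i) < 0}. (dn i - up i) * the (l i))"
  have R: "round_up F R \<in> F \<and> R < round_up F R"
    using round_up_props[OF ex_rhs] unfolding R_def up_def dn_def .
  have ud: "\<And>i. i \<in> U \<union> L \<Longrightarrow> up i \<in> F \<and> s * \<alpha> i < up i \<and> dn i \<in> F \<and> dn i < s * \<alpha> i"
    using ex_coef round_up_props round_down_props unfolding up_def dn_def by blast
  have rep: "F_representable F n c (round_up F R)"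
    unfolding F_representable_def c_def using R ud F0 by auto
  define g1 where "g1 i = (if i \<in> U \<and> the (u i) > 0 then (up i - dn i) * the (u i) else 0)" for i
  define g2 where "g2 i = (if i \<in> L \<and> the (l i) < 0 then (dn i - up i) * the (l i) else 0)" for i
  have fU: "{i\<in>U. the (u i) > 0} = {i\<in>{..<n}. i \<in> U \<and> the (u i) > 0}" using UL by auto
  have fL: "{i\<in>L. the (l i) < 0} = {i\<in>{..<n}. i \<in> L \<and> the (l i) < 0}" using UL by auto
  have Rsum: "of_rat R = (of_rat (s * \<beta>) :: real) + (\<Sum>i<n. of_rat (g1 i)) + (\<Sum>i<n. of_rat (g2 i))"
    unfolding R_def of_rat_add of_rat_sum[symmetric] g1_def g2_def
    by (simp only: fU fL sum.inter_filter[OF finite_lessThan])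
  have val: "valid_ineq n c (round_up F R) (mip_feasible n m A b l u I)"
    unfolding valid_ineq_def
  proof
    fix x assume x: "x \<in> mip_feasible n m A b l u I"
    have lb: "\<And>i. i < n \<Longrightarrow> l i = Some li \<Longrightarrow> of_rat li \<le> x i" for li
      using x unfolding mip_feasible_def by force
    have ub: "\<And>i. i < n \<Longrightarrow> u i = Some ui \<Longrightarrow> x i \<le> of_rat ui" for ui
      using x unfolding mip_feasible_def by force
    have av: "(\<Sum>i<n. of_rat (\<alpha> i) * x i) \<le> of_rat \<beta>"
      using valid x unfolding valid_ineq_def by blast
    have sav: "(\<Sum>i<n. of_rat (s * \<alpha> i) * x i) \<le> of_rat (s * \<beta>)"
    proof -
      have "(\<Sum>i<n. of_rat (s * \<alpha> i) * x i) = of_rat s * (\<Sum>i<n. of_rat (\<alpha> i) * x i)"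
        by (simp add: of_rat_mult sum_distrib_left mult.assoc)
      also have "\<dots> \<le> of_rat s * of_rat \<beta>"
        using av s by (intro mult_left_mono) auto
      finally show ?thesis by (simp add: of_rat_mult)
    qed
    have pt: "of_rat (c i) * x i \<le> of_rat (s * \<alpha> i) * x i + of_rat (g1 i) + of_rat (g2 i)"
      if i: "i < n" for i
    proof (cases "i \<in> U")
      case True
      then have nL: "i \<notin> L" using UL by auto
      obtain ui where ui: "u i = Some ui" using ufin True by auto
      have xu: "x i \<le> of_rat ui" using ub[OF i ui] .
      have p: "s * \<alpha> i < up i" "dn i < s * \<alpha> i" using ud True by auto
      have p': "(of_rat (s * \<alpha> i)::real) < of_rat (up i)" "(of_rat (dn i)::real) < of_rat (s * \<alpha> i)"
        using p by (simp_all add: of_rat_less)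
      have "(of_rat (up i) - of_rat (s * \<alpha> i)) * x i \<le> (of_rat (up i) - of_rat (s * \<alpha> i)) * (of_rat ui :: real)"
        using xu p' by (intro mult_left_mono) auto
      also have "\<dots> \<le> of_rat (g1 i)"
      proof (cases "ui > 0")
        case True
        then have "(0::real) < of_rat ui" by (simp add: of_rat_less[of 0, simplified])
        then have "(of_rat (up i) - of_rat (s * \<alpha> i)) * (of_rat ui :: real) \<le> (of_rat (up i) - of_rat (dn i)) * of_rat ui"
          using p' by (intro mult_right_mono) auto
        then show ?thesis using True \<open>i \<in> U\<close> ui unfolding g1_def by (simp add: of_rat_mult of_rat_diff)
      next
        case False
        then have "(of_rat ui::real) \<le> 0" by (simp add: of_rat_less_eq[of _ 0, simplified])
        then have "(of_rat (up i) - of_rat (s * \<alpha> i)) * (of_rat ui :: real) \<le> 0"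
          using p' by (intro mult_nonneg_nonpos) auto
        then show ?thesis using False ui unfolding g1_def by simp
      qed
      finally show ?thesis using True nL unfolding c_def g2_def by (simp add: algebra_simps)
    next
      case nU: False
      show ?thesis
      proof (cases "i \<in> L")
        case True
        obtain li where li: "l i = Some li" using lfin True by auto
        have xl: "of_rat li \<le> x i" using lb[OF i li] .
        have p: "s * \<alpha> i < up i" "dn i < s * \<alpha> i" using ud True by auto
        have p': "(of_rat (s * \<alpha> i)::real) < of_rat (up i)" "(of_rat (dn i)::real) < of_rat (s * \<alpha> i)"
          using p by (simp_all add: of_rat_less)
        have "(of_rat (dn i) - of_rat (s * \<alpha> i)) * x i \<le> (of_rat (dn i) - of_rat (s * \<alpha> i)) * (of_rat li :: real)"
          using xl p' by (intro mult_left_mono_neg) auto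
        also have "\<dots> \<le> of_rat (g2 i)"
        proof (cases "li < 0")
          case True
          then have "(of_rat li::real) < 0" by (simp add: of_rat_less[of _ 0, simplified])
          then have "(of_rat (dn i) - of_rat (s * \<alpha> i)) * (of_rat li :: real) \<le> (of_rat (dn i) - of_rat (up i)) * of_rat li"
            using p' by (intro mult_right_mono_neg) auto
          then show ?thesis using True \<open>i \<in> L\<close> li unfolding g2_def by (simp add: of_rat_mult of_rat_diff)
        next
          case False
          then have "(0::real) \<le> of_rat li" by (simp add: of_rat_less_eq[of 0, simplified])
          then have "(of_rat (dn i) - of_rat (s * \<alpha> i)) * (of_rat li :: real) \<le> 0"
            using p' by (intro mult_nonpos_nonneg) auto
          then show ?thesis using False li unfolding g2_def by simp
        qed
        finally show ?thesis using True nU unfolding c_def g1_def by (simp add: algebra_simps)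
      next
        case False
        then have "\<alpha> i = 0" using zero i nU by auto
        then show ?thesis using False nU unfolding c_def g1_def g2_def by simp
      qed
    qed
    have "(\<Sum>i<n. of_rat (c i) * x i) \<le> (\<Sum>i<n. of_rat (s * \<alpha> i) * x i + of_rat (g1 i) + of_rat (g2 i))"
      using pt by (intro sum_mono) auto
    also have "\<dots> = (\<Sum>i<n. of_rat (s * \<alpha> i) * x i) + (\<Sum>i<n. of_rat (g1 i)) + (\<Sum>i<n. of_rat (g2 i))"
      by (simp add: sum.distrib)
    also have "\<dots> \<le> of_rat R" using sav Rsum by simp
    also have "\<dots> \<le> of_rat (round_up F R)" using R by (simp add: of_rat_less_eq)
    finally show "(\<Sum>i<n. of_rat (c i) * x i) \<le> of_rat (round_up F R)" .
  qed
  show ?thesis using val rep unfolding c_def R_def up_def dn_def by simp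
qed

end
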